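(* Let $G=(V,E)$ be a symmetric tree topology and let sets $R,S$ with $|R|=|S|=N/2$ be initially partitioned among the compute nodes, with $N_v$ the number of elements of $R$ and $S$ held by compute node $v$. Any algorithm computing the cartesian product $R\times S$ has (tuple) cost $\Omega(C_{LB})$, where \[C_{LB}=\max_{e\in E}\frac{1}{w_e}\cdot\min\Big\{\sum_{v\in V_e^-}N_v,\ \sum_{v\in V_e^+}N_v\Big\}.\]
   Context: Topology-aware model: the network is a directed graph $G=(V,E)$; each edge $e$ has bandwidth $w_e>0$; $V_C\subseteq V$ are the compute nodes (only they store data and compute; other nodes only route). $G$ is a symmetric tree topology: for every $(u,v)\in E$ also $(v,u)\in E$ with the same bandwidth, and the underlying undirected graph is a tree. The input is partitioned without duplication among the compute nodes; the algorithm knows the topology, bandwidths and local fragment sizes. Computation proceeds in synchronous rounds; in each round compute nodes compute locally and send data along paths. The tuple cost of round $i$ is $\max_e|Y_i(e)|/w_e$ where $|Y_i(e)|$ is the number of elements routed through edge $e$ in round $i$; the total cost is the sum over rounds. For an edge $e=(u,v)$, removing $e$ splits the compute nodes into $V_e^-$ (on $u$'s side) and $V_e^+$ (on $v$'s side). Computing $R\times S$ means every pair $(r,s)$ with $r\in R,s\in S$ is emitted by at least one compute node, which must hold both $r$ and $s$ at that time. *)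

theory Defs
  imports Complex_Main
begin

(* Vertices and data elements are represented by natural numbers.
   A directed edge is a pair of vertices. *)

type_synonym edge = "nat \<times> nat"

definition remove_edge :: "edge set \<Rightarrow> edge \<Rightarrow> edge set" where
  "remove_edge E e = E - {(fst e, snd e), (snd e, fst e)}"

(* Symmetric tree topology: finite nonempty vertex set, symmetric irreflexive
   edge relation, connected, and acyclic (every edge is a bridge). *)
definition sym_tree :: "nat set \<Rightarrow> edge set \<Rightarrow> bool" where
  "sym_tree V E \<longleftrightarrow> finite V \<and> V \<noteq> {} \<and> E \<subseteq> V \<times> V \<and> sym E \<and>
     (\<forall>v. (v, v) \<notin> E) \<and>
     (\<forall>x\<in>V. \<forall>y\<in>V. (x, y) \<in> E\<^sup>*) \<and>
     (\<forall>e\<in>E. e \<notin> (remove_edge E e)\<^sup>*)"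

definition Vminus :: "edge set \<Rightarrow> nat set \<Rightarrow> edge \<Rightarrow> nat set" where
  "Vminus E VC e = {x \<in> VC. (fst e, x) \<in> (remove_edge E e)\<^sup>*}"

definition Vplus :: "edge set \<Rightarrow> nat set \<Rightarrow> edge \<Rightarrow> nat set" where
  "Vplus E VC e = {x \<in> VC. (snd e, x) \<in> (remove_edge E e)\<^sup>*}"

definition input_partition :: "nat set \<Rightarrow> nat set \<Rightarrow> nat set \<Rightarrow> (nat \<Rightarrow> nat set) \<Rightarrow> bool" where
  "input_partition VC R S init \<longleftrightarrow>
     (\<forall>v. v \<notin> VC \<longrightarrow> init v = {}) \<and>
     (\<Union>v\<in>VC. init v) = R \<union> S \<and>
     (\<forall>u\<in>VC. \<forall>v\<in>VC. u \<noteq> v \<longrightarrow> init u \<inter> init v = {})"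

definition is_path :: "edge set \<Rightarrow> nat list \<Rightarrow> bool" where
  "is_path E p \<longleftrightarrow> p \<noteq> [] \<and> (\<forall>j. Suc j < length p \<longrightarrow> (p ! j, p ! Suc j) \<in> E)"

definition path_edges :: "nat list \<Rightarrow> edge set" where
  "path_edges p = {(p ! j, p ! Suc j) | j. Suc j < length p}"

(* An execution: sends i is the set of pairs (x, p): in round i element x is sent
   along path p (from hd p to last p).  Data held by node v at time i
   (after i rounds); nodes may keep everything they ever received. *)
fun hold :: "(nat \<Rightarrow> nat set) \<Rightarrow> (nat \<Rightarrow> (nat \<times> nat list) set) \<Rightarrow> nat \<Rightarrow> nat \<Rightarrow> nat set" where
  "hold init sends v 0 = init v"
| "hold init sends v (Suc i) =
     hold init sends v i \<union> {x. \<exists>p. (x, p) \<in> sends i \<and> last p = v}"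

definition valid_exec :: "edge set \<Rightarrow> nat set \<Rightarrow> (nat \<Rightarrow> nat set) \<Rightarrow> nat
    \<Rightarrow> (nat \<Rightarrow> (nat \<times> nat list) set) \<Rightarrow> bool" where
  "valid_exec E VC init k sends \<longleftrightarrow>
     (\<forall>i<k. \<forall>(x, p)\<in>sends i. is_path E p \<and> hd p \<in> VC \<and> last p \<in> VC \<and>
        x \<in> hold init sends (hd p) i) \<and>
     (\<forall>i\<ge>k. sends i = {})"

definition computes_product :: "nat set \<Rightarrow> (nat \<Rightarrow> nat set) \<Rightarrow> (nat \<Rightarrow> (nat \<times> nat list) set)
    \<Rightarrow> nat \<Rightarrow> nat set \<Rightarrow> nat set \<Rightarrow> bool" where
  "computes_product VC init sends k R S \<longleftrightarrow>
     (\<forall>r\<in>R. \<forall>s\<in>S. \<exists>v\<in>VC. \<exists>t\<le>k. r \<in> hold init sends v t \<and> s \<in> hold init sends v t)"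

definition routed :: "(nat \<Rightarrow> (nat \<times> nat list) set) \<Rightarrow> nat \<Rightarrow> edge \<Rightarrow> nat set" where
  "routed sends i e = {x. \<exists>p. (x, p) \<in> sends i \<and> e \<in> path_edges p}"

(* tuple cost: sum over rounds of max_e |Y_i(e)| / w_e  (0 inserted for E = {}) *)
definition tuple_cost :: "edge set \<Rightarrow> (edge \<Rightarrow> real) \<Rightarrow> (nat \<Rightarrow> (nat \<times> nat list) set) \<Rightarrow> nat \<Rightarrow> real" where
  "tuple_cost E w sends k =
     (\<Sum>i<k. Max (insert 0 ((\<lambda>e. real (card (routed sends i e)) / w e) ` E)))"

definition C_LB :: "edge set \<Rightarrow> (edge \<Rightarrow> real) \<Rightarrow> nat set \<Rightarrow> (nat \<Rightarrow> nat set) \<Rightarrow> real" where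
  "C_LB E w VC init =
     Max (insert 0 ((\<lambda>e. (1 / w e) *
        min (\<Sum>v\<in>Vminus E VC e. real (card (init v))) (\<Sum>v\<in>Vplus E VC e. real (card (init v)))) ` E))"

end

theory Submission
  imports Defs
begin

lemma D_sym: "sym E \<Longrightarrow> sym (E - {(u,v),(v,u)})"
  unfolding sym_def by blast

lemma D_rtr_sym: "sym E \<Longrightarrow> (a,b) \<in> (E - {(u,v),(v,u)})\<^sup>* \<Longrightarrow> (b,a) \<in> (E - {(u,v),(v,u)})\<^sup>*"
  by (metis D_sym sym_rtrancl symD)

lemma cover: "(u,x) \<in> E\<^sup>* \<Longrightarrow> (u,x) \<in> (E - {(u,v),(v,u)})\<^sup>* \<or> (v,x) \<in> (E - {(u,v),(v,u)})\<^sup>*"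
proof (induction rule: rtrancl_induct)
  case base
  then show ?case by simp
next
  case (step y z)
  show ?case
  proof (cases "(y,z) \<in> {(u,v),(v,u)}")
    case True
    then have "z = u \<or> z = v" by blast
    then show ?thesis by blast
  next
    case False
    then have "(y,z) \<in> E - {(u,v),(v,u)}" using step by blast
    then show ?thesis using step.IH by (meson rtrancl.rtrancl_into_rtrancl)
  qed
qed

lemma path_rtr: "p \<noteq> [] \<Longrightarrow> (\<forall>j. Suc j < length p \<longrightarrow> (p!j, p!Suc j) \<in> D) \<Longrightarrow> (hd p, last p) \<in> D\<^sup>*"
proof (induction p)
  case Nil
  then show ?case by simp
next
  case (Cons a p)
  show ?case
  proof (cases "p = []")
    case True
    then show ?thesis by simp
  next
    case False
    have "\<forall>j. Suc j < length p \<longrightarrow> (p!j, p!Suc j) \<in> D"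
    proof (intro allI impI)
      fix j assume "Suc j < length p"
      then show "(p!j, p!Suc j) \<in> D" using Cons.prems(2)[rule_format, of "Suc j"] by simp
    qed
    then have "(hd p, last p) \<in> D\<^sup>*" using Cons.IH False by blast
    moreover have "(a, hd p) \<in> D" using Cons.prems(2)[rule_format, of 0] False
      by (simp add: hd_conv_nth)
    ultimately show ?thesis using False by (simp add: converse_rtrancl_into_rtrancl)
  qed
qed

lemma hold_sub:
  assumes "input_partition VC R S init" "valid_exec E VC init k sends"
  shows "hold init sends y t \<subseteq> R \<union> S"
proof (induction t arbitrary: y)
  case 0
  then show ?case using assms(1) unfolding input_partition_def
    by (cases "y \<in> VC") auto
next
  case (Suc t)
  have "{x. \<exists>p. (x, p) \<in> sends t \<and> last p = y} \<subseteq> R \<union> S"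
  proof
    fix x assume "x \<in> {x. \<exists>p. (x, p) \<in> sends t \<and> last p = y}"
    then obtain p where p: "(x,p) \<in> sends t" by blast
    then have "t < k" using assms(2) unfolding valid_exec_def by (metis empty_iff not_less)
    then have "x \<in> hold init sends (hd p) t" using p assms(2) unfolding valid_exec_def by fastforce
    then show "x \<in> R \<union> S" using Suc.IH by blast
  qed
  then show ?case using Suc.IH by simp
qed

lemma invariant:
  assumes ip: "input_partition VC R S init" and ve: "valid_exec E VC init k sends"
    and nr: "\<forall>i<k. x \<notin> routed sends i (u,v) \<and> x \<notin> routed sends i (v,u)"
    and xz: "x \<in> init z" and zS: "(w0, z) \<in> (E - {(u,v),(v,u)})\<^sup>*"
  shows "x \<in> hold init sends y t \<Longrightarrow> (w0, y) \<in> (E - {(u,v),(v,u)})\<^sup>*"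
proof (induction t arbitrary: y)
  case 0
  then have "x \<in> init y" by simp
  then have "y \<in> VC" "z \<in> VC" using ip xz unfolding input_partition_def by auto
  then have "y = z" using ip xz \<open>x \<in> init y\<close> unfolding input_partition_def by blast
  then show ?case using zS by simp
next
  case (Suc t)
  show ?case
  proof (cases "x \<in> hold init sends y t")
    case True
    then show ?thesis using Suc.IH by blast
  next
    case False
    then obtain p where p: "(x,p) \<in> sends t" "last p = y" using Suc.prems by auto
    then have tk: "t < k" using ve unfolding valid_exec_def by (metis empty_iff not_less)
    then have pp: "is_path E p" "x \<in> hold init sends (hd p) t" using p ve unfolding valid_exec_def by fastforce+
    have h: "(w0, hd p) \<in> (E - {(u,v),(v,u)})\<^sup>*" using Suc.IH pp(2) by blast
    have "\<forall>j. Suc j < length p \<longrightarrow> (p!j, p!Suc j) \<in> E - {(u,v),(v,u)}"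
    proof (intro allI impI)
      fix j assume j: "Suc j < length p"
      have "(p!j, p!Suc j) \<in> path_edges p" using j unfolding path_edges_def by blast
      then have "(p!j, p!Suc j) \<noteq> (u,v) \<and> (p!j, p!Suc j) \<noteq> (v,u)"
        using nr tk p(1) unfolding routed_def by blast
      moreover have "(p!j, p!Suc j) \<in> E" using pp(1) j unfolding is_path_def by blast
      ultimately show "(p!j, p!Suc j) \<in> E - {(u,v),(v,u)}" by blast
    qed
    then have "(hd p, last p) \<in> (E - {(u,v),(v,u)})\<^sup>*"
      using path_rtr pp(1) unfolding is_path_def by blast
    then show ?thesis using h p(2) by (meson rtrancl_trans)
  qed
qed

lemma comb:
  fixes R S A B X :: "nat set"
  assumes "finite R" "finite S" "R \<inter> S = {}" "card R = card S" "A \<union> B = R \<union> S" "A \<inter> B = {}"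
    "finite X"
    "\<And>r s. r \<in> R \<inter> A - X \<Longrightarrow> s \<in> S \<inter> B - X \<Longrightarrow> False"
    "\<And>r s. r \<in> R \<inter> B - X \<Longrightarrow> s \<in> S \<inter> A - X \<Longrightarrow> False"
  shows "min (card A) (card B) \<le> card X"
proof -
  have fA: "finite A" "finite B" using assms(1,2,5) by (metis finite_Un)+
  have ab: "card A + card B = card R + card S"
    using assms(1-6) fA by (metis card_Un_disjoint)
  have c1: "R \<inter> A \<subseteq> X \<or> S \<inter> B \<subseteq> X" using assms(8) by blast
  have c2: "R \<inter> B \<subseteq> X \<or> S \<inter> A \<subseteq> X" using assms(9) by blast
  have AR: "A \<subseteq> R \<union> S" "B \<subseteq> R \<union> S" using assms(5) by blast+
  show ?thesis
  proof -
    { assume "R \<inter> A \<subseteq> X" "S \<inter> A \<subseteq> X"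
      then have "A \<subseteq> X" using AR by blast
      then have "card A \<le> card X" using card_mono assms(7) by blast
      then have ?thesis by linarith }
    moreover
    { assume "S \<inter> B \<subseteq> X" "R \<inter> B \<subseteq> X"
      then have "B \<subseteq> X" using AR by blast
      then have "card B \<le> card X" using card_mono assms(7) by blast
      then have ?thesis by linarith }
    moreover
    { assume "R \<inter> A \<subseteq> X" "R \<inter> B \<subseteq> X"
      then have "R \<subseteq> X" using assms(5) by blast
      then have "card R \<le> card X" using card_mono assms(7) by blast
      then have ?thesis using ab assms(4) by linarith }
    moreover
    { assume "S \<inter> B \<subseteq> X" "S \<inter> A \<subseteq> X"
      then have "S \<subseteq> X" using assms(5) by blast
      then have "card S \<le> card X" using card_mono assms(7) by blast
      then have ?thesis using ab assms(4) by linarith }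
    ultimately show ?thesis using c1 c2 by blast
  qed
qed

lemma routed_sub:
  assumes "input_partition VC R S init" "valid_exec E VC init k sends"
  shows "routed sends i e \<subseteq> R \<union> S"
proof
  fix x assume "x \<in> routed sends i e"
  then obtain p where p: "(x,p) \<in> sends i" unfolding routed_def by blast
  then have "i < k" using assms(2) unfolding valid_exec_def by (metis empty_iff not_less)
  then have "x \<in> hold init sends (hd p) i" using p assms(2) unfolding valid_exec_def by fastforce
  then show "x \<in> R \<union> S" using hold_sub[OF assms] by blast
qed

lemma max_ge:
  assumes "finite E" "e \<in> E"
  shows "g e \<le> Max (insert (0::real) (g ` E))"
  using assms by (intro Max_ge) auto

lemma max_ge0:
  assumes "finite E"
  shows "0 \<le> Max (insert (0::real) (g ` E))"
  using assms by (intro Max_ge) auto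

lemma edge_bound:
  assumes st: "sym_tree V E" and wpos: "\<forall>e\<in>E. w e > 0"
    and wsym: "\<forall>u v. (u, v) \<in> E \<longrightarrow> w (u, v) = w (v, u)"
    and VC: "VC \<subseteq> V" and fR: "finite R" and fS: "finite S" and RS: "R \<inter> S = {}"
    and cRS: "card R = card S"
    and ip: "input_partition VC R S init" and ve: "valid_exec E VC init k sends"
    and cp: "computes_product VC init sends k R S"
    and uv: "(u,v) \<in> E"
  shows "(1 / w (u,v)) * min (\<Sum>z\<in>Vminus E VC (u,v). real (card (init z)))
            (\<Sum>z\<in>Vplus E VC (u,v). real (card (init z))) \<le> 2 * tuple_cost E w sends k"
proof -
  define D where "D = E - {(u,v),(v,u)}"
  have fV: "finite V" and EV: "E \<subseteq> V \<times> V" and symE: "sym E"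
    and conn: "\<forall>x\<in>V. \<forall>y\<in>V. (x, y) \<in> E\<^sup>*" and br: "(u,v) \<notin> D\<^sup>*"
    using st uv unfolding sym_tree_def D_def remove_edge_def by auto
  have fE: "finite E" using fV EV by (meson finite_SigmaI finite_subset)
  have vu: "(v,u) \<in> E" using symE uv by (meson symD)
  define W where "W = w (u,v)"
  have W: "W > 0" "w (v,u) = W" using wpos uv wsym unfolding W_def by (auto, metis)
  define Y where "Y i = routed sends i (u,v) \<union> routed sends i (v,u)" for i
  define X where "X = (\<Union>i<k. Y i)"
  have finY: "finite (Y i)" for i
    using routed_sub[OF ip ve] fR fS unfolding Y_def by (meson finite_Un finite_subset)
  have fX: "finite X" unfolding X_def using finY by blast
  have cX: "card X \<le> (\<Sum>i<k. card (routed sends i (u,v)) + card (routed sends i (v,u)))"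
  proof -
    have "card X \<le> (\<Sum>i<k. card (Y i))" unfolding X_def by (rule card_UN_le) simp
    also have "\<dots> \<le> (\<Sum>i<k. card (routed sends i (u,v)) + card (routed sends i (v,u)))"
      unfolding Y_def by (intro sum_mono card_Un_le)
    finally show ?thesis .
  qed
  have round: "(real (card (routed sends i (u,v))) + real (card (routed sends i (v,u)))) / W
      \<le> 2 * Max (insert 0 ((\<lambda>e. real (card (routed sends i e)) / w e) ` E))" for i
  proof -
    have a: "real (card (routed sends i (u,v))) / W \<le> Max (insert 0 ((\<lambda>e. real (card (routed sends i e)) / w e) ` E))"
      using max_ge[OF fE uv, of "\<lambda>e. real (card (routed sends i e)) / w e"] unfolding W_def by simp
    have b: "real (card (routed sends i (v,u))) / W \<le> Max (insert 0 ((\<lambda>e. real (card (routed sends i e)) / w e) ` E))"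
      using max_ge[OF fE vu, of "\<lambda>e. real (card (routed sends i e)) / w e"] W(2) by simp
    show ?thesis using a b by (simp add: add_divide_distrib)
  qed
  have costb: "real (card X) / W \<le> 2 * tuple_cost E w sends k"
  proof -
    have "real (card X) / W \<le> real (\<Sum>i<k. card (routed sends i (u,v)) + card (routed sends i (v,u))) / W"
      using cX W(1) by (intro divide_right_mono) (simp_all only: of_nat_le_iff less_imp_le)
    also have "\<dots> = (\<Sum>i<k. (real (card (routed sends i (u,v))) + real (card (routed sends i (v,u)))) / W)"
      by (simp add: sum_divide_distrib)
    also have "\<dots> \<le> (\<Sum>i<k. 2 * Max (insert 0 ((\<lambda>e. real (card (routed sends i e)) / w e) ` E)))"
      by (intro sum_mono round)
    also have "\<dots> = 2 * tuple_cost E w sends k"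
      unfolding tuple_cost_def by (simp add: sum_distrib_left)
    finally show ?thesis .
  qed
  define Vm where "Vm = {x \<in> VC. (u, x) \<in> D\<^sup>*}"
  define Vp where "Vp = {x \<in> VC. (v, x) \<in> D\<^sup>*}"
  have Vm: "Vminus E VC (u,v) = Vm" and Vp: "Vplus E VC (u,v) = Vp"
    unfolding Vm_def Vp_def D_def Vminus_def Vplus_def remove_edge_def by simp_all
  have fVC: "finite VC" using VC fV finite_subset by blast
  have ipU: "(\<Union>v\<in>VC. init v) = R \<union> S" and ipD: "\<forall>a\<in>VC. \<forall>b\<in>VC. a \<noteq> b \<longrightarrow> init a \<inter> init b = {}"
    and ip0: "\<forall>v. v \<notin> VC \<longrightarrow> init v = {}"
    using ip unfolding input_partition_def by auto
  have finit: "finite (init z)" for z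
  proof (cases "z \<in> VC")
    case True then have "init z \<subseteq> R \<union> S" using ipU by blast
    then show ?thesis using fR fS finite_subset by blast
  next
    case False then show ?thesis using ip0 by simp
  qed
  define A where "A = (\<Union>z\<in>Vm. init z)"
  define B where "B = (\<Union>z\<in>Vp. init z)"
  have sumA: "(\<Sum>z\<in>Vm. real (card (init z))) = real (card A)"
  proof -
    have "card A = (\<Sum>z\<in>Vm. card (init z))" unfolding A_def
      by (rule card_UN_disjoint) (use fVC finit ipD in \<open>auto simp: Vm_def\<close>)
    then show ?thesis by simp
  qed
  have sumB: "(\<Sum>z\<in>Vp. real (card (init z))) = real (card B)"
  proof -
    have "card B = (\<Sum>z\<in>Vp. card (init z))" unfolding B_def
      by (rule card_UN_disjoint) (use fVC finit ipD in \<open>auto simp: Vp_def\<close>)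
    then show ?thesis by simp
  qed
  have noboth: "False" if "(u,y) \<in> D\<^sup>*" "(v,y) \<in> D\<^sup>*" for y
  proof -
    have "(y,v) \<in> D\<^sup>*" using D_rtr_sym[OF symE] that(2) unfolding D_def by blast
    then have "(u,v) \<in> D\<^sup>*" using that(1) by (meson rtrancl_trans)
    then show False using br by blast
  qed
  have AB: "A \<union> B = R \<union> S"
  proof
    show "A \<union> B \<subseteq> R \<union> S" unfolding A_def B_def Vm_def Vp_def using ipU by blast
    show "R \<union> S \<subseteq> A \<union> B"
    proof
      fix x assume "x \<in> R \<union> S"
      then obtain z where z: "z \<in> VC" "x \<in> init z" using ipU by blast
      have "u \<in> V" using uv EV by blast
      then have "(u,z) \<in> E\<^sup>*" using conn z VC by blast
      then have "(u,z) \<in> D\<^sup>* \<or> (v,z) \<in> D\<^sup>*" unfolding D_def by (rule cover)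
      then show "x \<in> A \<union> B" unfolding A_def B_def Vm_def Vp_def using z by blast
    qed
  qed
  have ABd: "A \<inter> B = {}"
  proof (rule ccontr)
    assume "A \<inter> B \<noteq> {}"
    then obtain x z z' where h: "z \<in> Vm" "z' \<in> Vp" "x \<in> init z" "x \<in> init z'"
      unfolding A_def B_def by blast
    show False
    proof (cases "z = z'")
      case True then show False using h noboth unfolding Vm_def Vp_def by blast
    next
      case False
      have "z \<in> VC" "z' \<in> VC" using h unfolding Vm_def Vp_def by auto
      then have "init z \<inter> init z' = {}" using ipD False by blast
      then show False using h by blast
    qed
  qed
  have nr: "\<forall>i<k. x \<notin> routed sends i (u,v) \<and> x \<notin> routed sends i (v,u)" if "x \<notin> X" for x
    using that unfolding X_def Y_def by blast
  have side: "(w0, y) \<in> D\<^sup>*" if "x \<notin> X" "x \<in> init z" "(w0,z) \<in> D\<^sup>*" "x \<in> hold init sends y t" for x z w0 y t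
    using invariant[OF ip ve nr[OF that(1)] that(2), of w0 y t] that(3,4) unfolding D_def by simp
  have cross: False if P: "r \<in> A - X" "s \<in> B - X" "r \<in> R" "s \<in> S" for r s
  proof -
    obtain y t where "r \<in> hold init sends y t" "s \<in> hold init sends y t"
      using cp P(3,4) unfolding computes_product_def by blast
    moreover obtain z where "z \<in> Vm" "r \<in> init z" using P(1) unfolding A_def by blast
    moreover obtain z' where "z' \<in> Vp" "s \<in> init z'" using P(2) unfolding B_def by blast
    ultimately have "(u,y) \<in> D\<^sup>*" "(v,y) \<in> D\<^sup>*"
      using side[of r z u y t] side[of s z' v y t] P(1,2) unfolding Vm_def Vp_def by simp_all
    then show False using noboth by blast
  qed
  have cross2: False if P: "r \<in> B - X" "s \<in> A - X" "r \<in> R" "s \<in> S" for r s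
  proof -
    obtain y t where "r \<in> hold init sends y t" "s \<in> hold init sends y t"
      using cp P(3,4) unfolding computes_product_def by blast
    moreover obtain z where "z \<in> Vp" "r \<in> init z" using P(1) unfolding B_def by blast
    moreover obtain z' where "z' \<in> Vm" "s \<in> init z'" using P(2) unfolding A_def by blast
    ultimately have "(u,y) \<in> D\<^sup>*" "(v,y) \<in> D\<^sup>*"
      using side[of s z' u y t] side[of r z v y t] P(1,2) unfolding Vm_def Vp_def by simp_all
    then show False using noboth by blast
  qed
  have "min (card A) (card B) \<le> card X"
    by (rule comb[OF fR fS RS cRS AB ABd fX]) (use cross cross2 in blast)+
  then have mn: "min (real (card A)) (real (card B)) \<le> real (card X)" by linarith
  have "(1 / W) * min (real (card A)) (real (card B)) \<le> real (card X) / W"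
    using mn W(1) by (simp add: divide_right_mono)
  then show ?thesis using costb sumA sumB Vm Vp unfolding W_def by simp
qed

theorem theorem3:
  shows "\<exists>c>0. \<forall>V E w VC R S init k sends.
     sym_tree V E \<and> (\<forall>e\<in>E. w e > 0) \<and> (\<forall>u v. (u, v) \<in> E \<longrightarrow> w (u, v) = w (v, u)) \<and>
     VC \<subseteq> V \<and> finite R \<and> finite S \<and> R \<inter> S = {} \<and> card R = card S \<and>
     input_partition VC R S init \<and> valid_exec E VC init k sends \<and>
     computes_product VC init sends k R S
     \<longrightarrow> tuple_cost E w sends k \<ge> c * C_LB E w VC init"
proof (intro exI[of _ "1/2::real"] conjI allI impI)
  fix V :: "nat set" and E :: "edge set" and w :: "edge \<Rightarrow> real" and VC R S :: "nat set" and init :: "nat \<Rightarrow> nat set"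
    and k :: nat and sends :: "nat \<Rightarrow> (nat \<times> nat list) set"
  assume H: "sym_tree V E \<and> (\<forall>e\<in>E. w e > 0) \<and> (\<forall>u v. (u, v) \<in> E \<longrightarrow> w (u, v) = w (v, u)) \<and>
     VC \<subseteq> V \<and> finite R \<and> finite S \<and> R \<inter> S = {} \<and> card R = card S \<and>
     input_partition VC R S init \<and> valid_exec E VC init k sends \<and>
     computes_product VC init sends k R S"
  have fE: "finite E" using H unfolding sym_tree_def by (meson finite_SigmaI finite_subset)
  have c0: "0 \<le> tuple_cost E w sends k" unfolding tuple_cost_def
    by (intro sum_nonneg max_ge0[OF fE])
  have eb: "\<forall>e\<in>E. (1 / w e) * min (\<Sum>v\<in>Vminus E VC e. real (card (init v))) (\<Sum>v\<in>Vplus E VC e. real (card (init v)))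
     \<le> 2 * tuple_cost E w sends k"
  proof
    fix e assume "e \<in> E"
    then obtain u v where "e = (u,v)" "(u,v) \<in> E" by (cases e) auto
    then show "(1 / w e) * min (\<Sum>v\<in>Vminus E VC e. real (card (init v))) (\<Sum>v\<in>Vplus E VC e. real (card (init v)))
     \<le> 2 * tuple_cost E w sends k" using edge_bound[of V E w VC R S init k sends u v] H by blast
  qed
  have "C_LB E w VC init \<le> 2 * tuple_cost E w sends k"
    unfolding C_LB_def using fE c0 eb by (subst Max_le_iff) auto
  then show "1/2 * C_LB E w VC init \<le> tuple_cost E w sends k" by simp
qed (simp)

end
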